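(* Let $(V,\nu)$ be a strongly complete PN-space, $(W,\mu)$ a PN-space, and $(T_n)_{n\in\mathbb{N}}$ a sequence in $B(V,W)$ such that $\sup_{n\in\mathbb{N}}\|T_nx\|_{w'}<\infty$ for every $x\in V$ and every $w'\in(0,1)$. Then for every $w'\in(0,1)$ there exists $w\in(0,1)$ such that $\sup_{n\in\mathbb{N}}\|T_n\|_{(w,w')}<\infty$.
   Context: A distance distribution function is a map $F:[-\infty,+\infty]\to[0,1]$ that is nondecreasing, left-continuous on $\mathbb{R}$, with $F(-\infty)=0$, $F(+\infty)=1$ and $F(0)=0$; the set of these is $\Delta^+$. $\mathcal{D}^+\subseteq\Delta^+$ denotes the proper ones, i.e. those with $\lim_{x\to+\infty}F(x)=1$. $H_0\in\Delta^+$ is $H_0(x)=0$ for $x\le 0$ and $H_0(x)=1$ for $x>0$. For $F,G\in\Delta^+$ let $\tau_M(F,G)(x)=\sup\{\min(F(s),G(t)) : s+t=x\}$. In this paper a PN-space $(V,\nu)$ is a real vector space $V$ with a map $\nu:V\to\Delta^+$, $p\mapsto\nu_p$, such that for all $p,q\in V$: $\nu_p=H_0$ iff $p=0$; $\nu_{p+q}\ge\tau_M(\nu_p,\nu_q)$ pointwise; and $\nu_{\alpha p}(x)=\nu_p(x/|\alpha|)$ for all real $\alpha\neq0$ and $x\ge 0$. Standing assumption: $\nu_p\in\mathcal{D}^+$ for every $p\in V$. For $x\in V$ and $w\in(0,1)$ put $\|x\|_w=\sup\{t\in\mathbb{R}:\nu_x(t)<w\}$ (in $W$ analogously using $\mu$);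 for each $w$ this is a norm, and $w\mapsto\|x\|_w$ is nondecreasing. The strong topology on $V$ is generated by the neighbourhoods $N_p(t)=\{q\in V:\nu_{p-q}(t)>1-t\}$, $p\in V$, $t>0$; equivalently the balls $\{x:\|x-p\|_w<r\}$ form a basis for it. A sequence $(p_n)$ converges strongly to $p$ if for every $t>0$ one has $p_n\in N_p(t)$ for all large $n$; it is strongly Cauchy if for every $t>0$ there is $N$ with $\nu_{p_n-p_m}(t)>1-t$ for all $m,n>N$. $(V,\nu)$ is strongly complete if every strongly Cauchy sequence converges strongly. $B(V,W)$ denotes the set of linear operators $V\to W$ that are continuous for the strong topologies. For a linear $T:V\to W$ and $w,w'\in(0,1)$, $\|T\|_{(w,w')}=\sup\{\|Tx\|_{w'}: x\in V,\ \|x\|_w\le 1\}\in[0,+\infty]$. *)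

theory Defs
  imports "HOL-Analysis.Analysis"
begin

text \<open>Distance distribution functions are represented by their restriction to the reals;
  the values at -infinity (0) and +infinity (1) are fixed by definition.\<close>

definition ddf :: "(real \<Rightarrow> real) \<Rightarrow> bool" where
  "ddf F \<longleftrightarrow> mono F \<and> (\<forall>x. 0 \<le> F x \<and> F x \<le> 1) \<and>
     (\<forall>x. (F \<longlongrightarrow> F x) (at_left x)) \<and> F 0 = 0"

definition proper_ddf :: "(real \<Rightarrow> real) \<Rightarrow> bool" where
  "proper_ddf F \<longleftrightarrow> ddf F \<and> (F \<longlongrightarrow> 1) at_top"

definition H0 :: "real \<Rightarrow> real" where
  "H0 x = (if x \<le> 0 then 0 else 1)"

definition tauM :: "(real \<Rightarrow> real) \<Rightarrow> (real \<Rightarrow> real) \<Rightarrow> real \<Rightarrow> real" where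
  "tauM F G x = Sup {min (F s) (G t) | s t. s + t = x}"

definition pn_space :: "('a::real_vector \<Rightarrow> real \<Rightarrow> real) \<Rightarrow> bool" where
  "pn_space \<nu> \<longleftrightarrow>
     (\<forall>p. proper_ddf (\<nu> p)) \<and>
     (\<forall>p. \<nu> p = H0 \<longleftrightarrow> p = 0) \<and>
     (\<forall>p q x. \<nu> (p + q) x \<ge> tauM (\<nu> p) (\<nu> q) x) \<and>
     (\<forall>p \<alpha> x. \<alpha> \<noteq> 0 \<longrightarrow> x \<ge> 0 \<longrightarrow> \<nu> (\<alpha> *\<^sub>R p) x = \<nu> p (x / \<bar>\<alpha>\<bar>))"

definition pn_norm :: "('a \<Rightarrow> real \<Rightarrow> real) \<Rightarrow> real \<Rightarrow> 'a \<Rightarrow> real" where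
  "pn_norm \<nu> w x = Sup {t. \<nu> x t < w}"

definition strong_nbhd :: "('a::real_vector \<Rightarrow> real \<Rightarrow> real) \<Rightarrow> 'a \<Rightarrow> real \<Rightarrow> 'a set" where
  "strong_nbhd \<nu> p t = {q. \<nu> (p - q) t > 1 - t}"

definition strong_open :: "('a::real_vector \<Rightarrow> real \<Rightarrow> real) \<Rightarrow> 'a set \<Rightarrow> bool" where
  "strong_open \<nu> U \<longleftrightarrow> (\<forall>p\<in>U. \<exists>t>0. strong_nbhd \<nu> p t \<subseteq> U)"

definition strong_conv :: "('a::real_vector \<Rightarrow> real \<Rightarrow> real) \<Rightarrow> (nat \<Rightarrow> 'a) \<Rightarrow> 'a \<Rightarrow> bool" where
  "strong_conv \<nu> s p \<longleftrightarrow> (\<forall>t>0. \<exists>N. \<forall>n\<ge>N. s n \<in> strong_nbhd \<nu> p t)"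

definition strong_cauchy :: "('a::real_vector \<Rightarrow> real \<Rightarrow> real) \<Rightarrow> (nat \<Rightarrow> 'a) \<Rightarrow> bool" where
  "strong_cauchy \<nu> s \<longleftrightarrow> (\<forall>t>0. \<exists>N. \<forall>m>N. \<forall>n>N. \<nu> (s n - s m) t > 1 - t)"

definition strongly_complete :: "('a::real_vector \<Rightarrow> real \<Rightarrow> real) \<Rightarrow> bool" where
  "strongly_complete \<nu> \<longleftrightarrow> (\<forall>s. strong_cauchy \<nu> s \<longrightarrow> (\<exists>p. strong_conv \<nu> s p))"

definition bounded_ops ::
  "('a::real_vector \<Rightarrow> real \<Rightarrow> real) \<Rightarrow> ('b::real_vector \<Rightarrow> real \<Rightarrow> real) \<Rightarrow> ('a \<Rightarrow> 'b) set" where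
  "bounded_ops \<nu> \<mu> = {T. linear T \<and> (\<forall>U. strong_open \<mu> U \<longrightarrow> strong_open \<nu> (T -` U))}"

definition op_norm ::
  "('a::real_vector \<Rightarrow> real \<Rightarrow> real) \<Rightarrow> ('b::real_vector \<Rightarrow> real \<Rightarrow> real) \<Rightarrow> real \<Rightarrow> real \<Rightarrow> ('a \<Rightarrow> 'b) \<Rightarrow> ereal" where
  "op_norm \<nu> \<mu> w w' T = (SUP x\<in>{x. pn_norm \<nu> w x \<le> 1}. ereal (pn_norm \<mu> w' (T x)))"

end

theory Submission imports Defs begin

definition dd :: "('a::real_vector \<Rightarrow> real \<Rightarrow> real) \<Rightarrow> 'a \<Rightarrow> 'a \<Rightarrow> real" where
  "dd \<nu> x y = Inf {t. 0 < t \<and> 1 - t < \<nu> (x - y) t}"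

lemma pn_parts:
  assumes "pn_space \<nu>"
  shows pn_D1: "\<forall>p. proper_ddf (\<nu> p)" and pn_D2: "\<forall>p. \<nu> p = H0 \<longleftrightarrow> p = 0"
    and pn_D3: "\<forall>p q x. \<nu> (p + q) x \<ge> tauM (\<nu> p) (\<nu> q) x"
    and pn_D4: "\<forall>p \<alpha> x. \<alpha> \<noteq> 0 \<longrightarrow> x \<ge> 0 \<longrightarrow> \<nu> (\<alpha> *\<^sub>R p) x = \<nu> p (x / \<bar>\<alpha>\<bar>)"
  using assms unfolding pn_space_def by simp_all

lemma ddf_parts:
  assumes "pn_space \<nu>"
  shows ddf_mono: "mono (\<nu> p)" and ddf_b: "\<forall>x. 0 \<le> \<nu> p x \<and> \<nu> p x \<le> 1"
    and ddf_0: "\<nu> p 0 = 0" and ddf_lim: "(\<nu> p \<longlongrightarrow> 1) at_top"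
proof -
  have "proper_ddf (\<nu> p)" using pn_D1[OF assms] by (rule spec)
  then have "mono (\<nu> p) \<and> (\<forall>x. 0 \<le> \<nu> p x \<and> \<nu> p x \<le> 1) \<and>
     (\<forall>x. (\<nu> p \<longlongrightarrow> \<nu> p x) (at_left x)) \<and> \<nu> p 0 = 0 \<and> (\<nu> p \<longlongrightarrow> 1) at_top"
    unfolding proper_ddf_def ddf_def by (elim conjE) (intro conjI)
  then show "mono (\<nu> p)" "\<forall>x. 0 \<le> \<nu> p x \<and> \<nu> p x \<le> 1" "\<nu> p 0 = 0" "(\<nu> p \<longlongrightarrow> 1) at_top"
    by simp_all
qed

lemma pn_mono: "pn_space \<nu> \<Longrightarrow> s \<le> t \<Longrightarrow> \<nu> p s \<le> \<nu> p t"
  using ddf_mono by (rule monoD)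

lemma pn_bounds: "pn_space \<nu> \<Longrightarrow> 0 \<le> \<nu> p t \<and> \<nu> p t \<le> 1"
  using ddf_b by (rule spec)

lemma pn_nonpos: "pn_space \<nu> \<Longrightarrow> t \<le> 0 \<Longrightarrow> \<nu> p t = 0"
proof -
  assume a: "pn_space \<nu>" "t \<le> 0"
  have "\<nu> p 0 = 0" using ddf_0[OF a(1)] .
  with pn_mono[OF a(1) a(2), of p] pn_bounds[OF a(1), of p t] show ?thesis by linarith
qed

lemma pn_large: "pn_space \<nu> \<Longrightarrow> c < 1 \<Longrightarrow> \<exists>N. \<forall>t\<ge>N. c < \<nu> p t"
proof -
  assume a: "pn_space \<nu>" "c < 1"
  have "(\<nu> p \<longlongrightarrow> 1) at_top" using ddf_lim[OF a(1)] .
  from order_tendstoD(1)[OF this a(2)] show ?thesis by (simp add: eventually_at_top_linorder)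
qed

lemma pn_tri: "pn_space \<nu> \<Longrightarrow> min (\<nu> p s) (\<nu> q t) \<le> \<nu> (p + q) (s + t)"
proof -
  assume a: "pn_space \<nu>"
  have "min (\<nu> p s) (\<nu> q t) \<le> tauM (\<nu> p) (\<nu> q) (s + t)"
    unfolding tauM_def
  proof (rule cSup_upper)
    show "min (\<nu> p s) (\<nu> q t) \<in> {min (\<nu> p s') (\<nu> q t') |s' t'. s' + t' = s + t}" by blast
    show "bdd_above {min (\<nu> p s') (\<nu> q t') |s' t'. s' + t' = s + t}"
      by (rule bdd_aboveI[of _ 1]) (use pn_bounds[OF a] in \<open>auto simp: min_le_iff_disj\<close>)
  qed
  also have "\<dots> \<le> \<nu> (p + q) (s + t)" using pn_D3[OF a] by blast
  finally show ?thesis .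
qed

lemma pn_scale: "pn_space \<nu> \<Longrightarrow> c \<noteq> 0 \<Longrightarrow> \<nu> (c *\<^sub>R p) t = \<nu> p (t / \<bar>c\<bar>)"
proof (cases "t \<ge> 0")
  case True
  assume "pn_space \<nu>" "c \<noteq> 0" then show ?thesis using True pn_D4 by blast
next
  case False
  assume a: "pn_space \<nu>" "c \<noteq> 0"
  have "t / \<bar>c\<bar> \<le> 0" using False a(2) by (simp add: divide_nonpos_pos)
  then show ?thesis using pn_nonpos[OF a(1)] False by simp
qed

lemma pn_neg: "pn_space \<nu> \<Longrightarrow> \<nu> (- p) = \<nu> p"
proof
  fix t assume a: "pn_space \<nu>"
  show "\<nu> (- p) t = \<nu> p t" using pn_scale[OF a, of "-1" p t] by simp
qed

lemma pn_zero: "pn_space \<nu> \<Longrightarrow> \<nu> 0 = H0"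
  using pn_D2 by blast

context fixes \<nu> :: "'a::real_vector \<Rightarrow> real \<Rightarrow> real" assumes pn: "pn_space \<nu>"
begin

lemma dset_ne: "\<exists>t. 0 < t \<and> 1 - t < \<nu> p t"
proof -
  have "0 \<le> \<nu> p 2" using pn_bounds[OF pn] by blast
  then show ?thesis by (intro exI[of _ 2]) auto
qed

lemma dd_le: "0 < t \<Longrightarrow> 1 - t < \<nu> (x - y) t \<Longrightarrow> dd \<nu> x y \<le> t"
  unfolding dd_def by (rule cInf_lower) (auto intro: bdd_belowI[of _ 0])

lemma dd_nonneg: "0 \<le> dd \<nu> x y"
  unfolding dd_def by (rule cInf_greatest) (use dset_ne in auto)

lemma dd_lt: assumes "dd \<nu> x y < t" shows "1 - t < \<nu> (x - y) t"
proof -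
  obtain s where s: "0 < s" "1 - s < \<nu> (x - y) s" "s < t"
    using cInf_lessD[of "{t. 0 < t \<and> 1 - t < \<nu> (x - y) t}" t] assms dset_ne unfolding dd_def by auto
  then show ?thesis using pn_mono[OF pn, of s t "x - y"] by linarith
qed

lemma dd_commute: "dd \<nu> x y = dd \<nu> y x"
proof -
  have "\<nu> (x - y) = \<nu> (y - x)" using pn_neg[OF pn, of "y - x"] by simp
  then show ?thesis unfolding dd_def by simp
qed

lemma dd_self: "dd \<nu> x x = 0"
proof -
  have "dd \<nu> x x \<le> t" if "t > 0" for t
    using that by (intro dd_le) (auto simp: pn_zero[OF pn] H0_def)
  then have "dd \<nu> x x \<le> 0" by (rule field_le_epsilon) simp
  then show ?thesis using dd_nonneg[of x x] by linarith
qed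

lemma dd_zero: assumes "dd \<nu> x y = 0" shows "x = y"
proof -
  have "\<nu> (x - y) t = H0 t" for t
  proof (cases "t \<le> 0")
    case True then show ?thesis by (simp add: pn_nonpos[OF pn] H0_def)
  next
    case False
    have L: "\<nu> (x - y) t \<ge> 1 - s" if "0 < s" "s < t" for s
    proof -
      have "1 - s < \<nu> (x - y) s" using dd_lt[of x y s] assms that(1) by simp
      moreover have "\<nu> (x - y) s \<le> \<nu> (x - y) t" using pn_mono[OF pn, of s t "x - y"] that(2) by simp
      ultimately show ?thesis by linarith
    qed
    have "1 \<le> \<nu> (x - y) t"
    proof (rule field_le_epsilon)
      fix e :: real assume e: "0 < e"
      have "1 - min e (t/2) \<le> \<nu> (x - y) t" using False e by (intro L) auto
      then show "1 \<le> \<nu> (x - y) t + e" by linarith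
    qed
    then have "\<nu> (x - y) t = 1" using pn_bounds[OF pn, of "x - y" t] by linarith
    then show ?thesis using False by (simp add: H0_def)
  qed
  then have "\<nu> (x - y) = H0" by (rule ext)
  then have "x - y = 0" using pn_D2[OF pn] by blast
  then show ?thesis by simp
qed

lemma dd_triangle: "dd \<nu> x z \<le> dd \<nu> x y + dd \<nu> y z" (is "?L \<le> ?R")
proof -
  have "dd \<nu> x z \<le> dd \<nu> x y + dd \<nu> y z + 2 * e" if "e > 0" for e
  proof -
    define s where "s = dd \<nu> x y + e"
    define t where "t = dd \<nu> y z + e"
    have st: "0 < s" "0 < t" using dd_nonneg that s_def t_def by (auto intro: add_nonneg_pos)
    have "1 - s < \<nu> (x - y) s" "1 - t < \<nu> (y - z) t"
      using dd_lt that s_def t_def by auto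
    moreover have "min (\<nu> (x - y) s) (\<nu> (y - z) t) \<le> \<nu> (x - z) (s + t)"
      using pn_tri[OF pn, of "x - y" s "y - z" t] by simp
    ultimately have "1 - (s + t) < \<nu> (x - z) (s + t)" using st by linarith
    then have "dd \<nu> x z \<le> s + t" using st by (intro dd_le) auto
    then show ?thesis using s_def t_def by simp
  qed
  note h = this
  show ?thesis
  proof (rule field_le_epsilon)
    fix e :: real assume "0 < e"
    then show "?L \<le> ?R + e" using h[of "e/2"] by simp
  qed
qed

lemma metric: "Metric_space UNIV (dd \<nu>)"
proof
  fix x y z
  show "0 \<le> dd \<nu> x y" by (rule dd_nonneg)
  show "dd \<nu> x y = dd \<nu> y x" by (rule dd_commute)
  show "dd \<nu> x y = 0 \<longleftrightarrow> x = y" if "x \<in> UNIV" "y \<in> UNIV"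
  proof
    assume "dd \<nu> x y = 0" then show "x = y" by (rule dd_zero)
  next
    assume "x = y" then show "dd \<nu> x y = 0" by (simp add: dd_self)
  qed
  show "dd \<nu> x z \<le> dd \<nu> x y + dd \<nu> y z" if "x \<in> UNIV" "y \<in> UNIV" "z \<in> UNIV"
    by (rule dd_triangle)
qed

lemma nset_bdd: assumes "w < 1" shows "bdd_above {t. \<nu> x t < w}"
proof -
  obtain N where N: "\<forall>t\<ge>N. w < \<nu> x t" using pn_large[OF pn assms] by blast
  show ?thesis
  proof (rule bdd_aboveI[of _ N])
    fix t assume t: "t \<in> {t. \<nu> x t < w}"
    show "t \<le> N"
    proof (rule ccontr)
      assume "\<not> t \<le> N"
      then have "w < \<nu> x t" using N by simp
      then show False using t by simp
    qed
  qed
qed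

lemma nset_ne: assumes "0 < w" shows "0 \<in> {t. \<nu> x t < w}"
  using pn_nonpos[OF pn, of 0 x] assms by simp

lemma N1': "0 < w \<Longrightarrow> w < 1 \<Longrightarrow> \<nu> x a < w \<Longrightarrow> a \<le> pn_norm \<nu> w x"
proof -
  assume a: "0 < w" "w < 1" "\<nu> x a < w"
  show ?thesis unfolding pn_norm_def
  proof (rule cSup_upper)
    show "a \<in> {t. \<nu> x t < w}" using a(3) by simp
    show "bdd_above {t. \<nu> x t < w}" using a(2) by (rule nset_bdd)
  qed
qed

lemma N0: "0 < w \<Longrightarrow> w < 1 \<Longrightarrow> 0 \<le> pn_norm \<nu> w x"
proof -
  assume a: "0 < w" "w < 1"
  have "\<nu> x 0 < w" using nset_ne[OF a(1), of x] by simp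
  then show ?thesis using N1'[OF a] by blast
qed

lemma N1: assumes "0 < w" "w < 1" "pn_norm \<nu> w x < a" shows "w \<le> \<nu> x a"
proof (rule ccontr)
  assume "\<not> w \<le> \<nu> x a"
  then have "a \<le> pn_norm \<nu> w x" using N1'[OF assms(1,2)] by simp
  then show False using assms(3) by simp
qed

lemma Nle: assumes "0 < w" "\<And>t. \<nu> x t < w \<Longrightarrow> t \<le> b" shows "pn_norm \<nu> w x \<le> b"
  unfolding pn_norm_def
proof (rule cSup_least)
  show "{t. \<nu> x t < w} \<noteq> {}" using nset_ne[OF assms(1), of x] by blast
  fix t assume "t \<in> {t. \<nu> x t < w}"
  then show "t \<le> b" using assms(2) by simp
qed

lemma Ntri: assumes w: "0 < w" "w < 1"
  shows "pn_norm \<nu> w (p + q) \<le> pn_norm \<nu> w p + pn_norm \<nu> w q" (is "?L \<le> ?R")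
proof -
  have "pn_norm \<nu> w (p + q) \<le> pn_norm \<nu> w p + pn_norm \<nu> w q + 2 * e" if e: "e > 0" for e
  proof -
    define a where "a = pn_norm \<nu> w p + e"
    define b where "b = pn_norm \<nu> w q + e"
    have "w \<le> \<nu> p a" "w \<le> \<nu> q b" using N1[OF w] e a_def b_def by auto
    then have wab: "w \<le> \<nu> (p + q) (a + b)" using pn_tri[OF pn, of p a q b] by linarith
    have "pn_norm \<nu> w (p + q) \<le> a + b"
    proof (rule Nle[OF w(1)])
      fix t assume "\<nu> (p + q) t < w"
      then show "t \<le> a + b" using wab pn_mono[OF pn, of "a + b" t "p + q"] by force
    qed
    then show ?thesis using a_def b_def by simp
  qed
  note h = this
  show ?thesis
  proof (rule field_le_epsilon)
    fix e :: real assume "0 < e"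
    then show "?L \<le> ?R + e" using h[of "e/2"] by simp
  qed
qed

lemma Nscale: assumes w: "0 < w" "w < 1" and c: "c > 0"
  shows "pn_norm \<nu> w (c *\<^sub>R x) \<le> c * pn_norm \<nu> w x"
proof (rule Nle[OF w(1)])
  fix t assume t: "\<nu> (c *\<^sub>R x) t < w"
  show "t \<le> c * pn_norm \<nu> w x"
  proof (cases "t \<le> 0")
    case True
    have "0 \<le> pn_norm \<nu> w x" using N0[OF w] .
    then have "0 \<le> c * pn_norm \<nu> w x" using c by simp
    then show ?thesis using True by linarith
  next
    case False
    have "\<nu> x (t / c) < w" using t pn_scale[OF pn, of c x t] c by simp
    then have "t / c \<le> pn_norm \<nu> w x" using N1'[OF w] by blast
    then show ?thesis using c by (simp add: divide_le_eq mult.commute)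
  qed
qed

lemma Nneg: "pn_norm \<nu> w (- x) = pn_norm \<nu> w x"
  unfolding pn_norm_def using pn_neg[OF pn] by simp

lemma N4: assumes w: "0 < w" "w < 1" and "dd \<nu> x y < t" "t \<le> 1 - w"
  shows "pn_norm \<nu> w (x - y) \<le> t"
proof (rule Nle[OF w(1)])
  have a: "w < \<nu> (x - y) t" using dd_lt[OF assms(3)] assms(4) by linarith
  fix s assume "\<nu> (x - y) s < w"
  show "s \<le> t"
  proof (rule ccontr)
    assume "\<not> s \<le> t"
    then have "\<nu> (x - y) t \<le> \<nu> (x - y) s" using pn_mono[OF pn, of t s "x - y"] by simp
    then show False using a \<open>\<nu> (x - y) s < w\<close> by linarith
  qed
qed

lemma N5: assumes s: "0 < s" "s < 1" and "pn_norm \<nu> (1 - s / 2) x < s"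
  shows "dd \<nu> p (p + x) \<le> s"
proof (rule dd_le[OF s(1)])
  have "1 - s / 2 \<le> \<nu> x s" by (rule N1[OF _ _ assms(3)]) (use s in simp_all)
  moreover have "\<nu> (p - (p + x)) = \<nu> x" using pn_neg[OF pn, of x] by simp
  ultimately show "1 - s < \<nu> (p - (p + x)) s" using s by simp
qed

lemma complete: assumes "strongly_complete \<nu>" shows "Metric_space.mcomplete UNIV (dd \<nu>)"
proof -
  interpret M: Metric_space UNIV "dd \<nu>" by (rule metric)
  show ?thesis unfolding M.mcomplete_def
  proof (intro allI impI)
    fix \<sigma> assume c: "M.MCauchy \<sigma>"
    have "strong_cauchy \<nu> \<sigma>" unfolding strong_cauchy_def
    proof (intro allI impI)
      fix t :: real assume t: "t > 0"
      obtain N where N: "\<And>n n'. N \<le> n \<Longrightarrow> N \<le> n' \<Longrightarrow> dd \<nu> (\<sigma> n) (\<sigma> n') < t"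
        using c t unfolding M.MCauchy_def by blast
      show "\<exists>N. \<forall>m>N. \<forall>n>N. 1 - t < \<nu> (\<sigma> n - \<sigma> m) t"
        by (intro exI[of _ N]) (auto intro!: dd_lt N)
    qed
    then obtain p where p: "strong_conv \<nu> \<sigma> p" using assms unfolding strongly_complete_def by blast
    have "limitin M.mtopology \<sigma> p sequentially"
      unfolding M.limitin_metric
    proof (intro conjI allI impI)
      fix e :: real assume e: "e > 0"
      have "e/2 > 0" using e by simp
      then obtain N where N0: "\<forall>n\<ge>N. \<sigma> n \<in> strong_nbhd \<nu> p (e/2)"
        using p unfolding strong_conv_def by blast
      have N: "1 - e/2 < \<nu> (p - \<sigma> n) (e/2)" if "n \<ge> N" for n
        using N0 that by (simp add: strong_nbhd_def)
      have "dd \<nu> (\<sigma> n) p < e" if "n \<ge> N" for n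
        using dd_le[OF _ N[OF that]] e dd_commute by fastforce
      then show "\<forall>\<^sub>F n in sequentially. \<sigma> n \<in> UNIV \<and> dd \<nu> (\<sigma> n) p < e"
        by (auto simp: eventually_sequentially)
    qed simp
    then show "\<exists>x. limitin M.mtopology \<sigma> x sequentially" by blast
  qed
qed

end

lemma cont_op:
  assumes pv: "pn_space \<nu>" and pw: "pn_space \<mu>" and T: "T \<in> bounded_ops \<nu> \<mu>" and e: "e > 0"
  shows "\<exists>\<delta>>0. \<forall>y. dd \<nu> x y < \<delta> \<longrightarrow> dd \<mu> (T x) (T y) < e"
proof -
  define U where "U = {z. dd \<mu> (T x) z < e}"
  have "strong_open \<mu> U" unfolding strong_open_def
  proof
    fix p assume "p \<in> U"
    then have a: "dd \<mu> (T x) p < e" by (simp add: U_def)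
    define t where "t = (e - dd \<mu> (T x) p) / 2"
    have t: "t > 0" using a t_def by simp
    have "strong_nbhd \<mu> p t \<subseteq> U"
    proof
      fix q assume "q \<in> strong_nbhd \<mu> p t"
      then have "dd \<mu> p q \<le> t" unfolding strong_nbhd_def using dd_le[OF pw t] by simp
      then show "q \<in> U" using dd_triangle[OF pw, of "T x" q p] t_def a unfolding U_def by simp
    qed
    then show "\<exists>t>0. strong_nbhd \<mu> p t \<subseteq> U" using t by blast
  qed
  then have "strong_open \<nu> (T -` U)" using T unfolding bounded_ops_def by blast
  moreover have "x \<in> T -` U" using e dd_self[OF pw] by (simp add: U_def)
  ultimately obtain t where t: "t > 0" "strong_nbhd \<nu> x t \<subseteq> T -` U"
    unfolding strong_open_def by blast
  have "dd \<mu> (T x) (T y) < e" if "dd \<nu> x y < t" for y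
  proof -
    have "y \<in> strong_nbhd \<nu> x t" using dd_lt[OF pv that] by (simp add: strong_nbhd_def)
    then show ?thesis using t by (auto simp: U_def)
  qed
  then show ?thesis using t by blast
qed

theorem theorem4p11:
  fixes \<nu> :: "'a::real_vector \<Rightarrow> real \<Rightarrow> real"
    and \<mu> :: "'b::real_vector \<Rightarrow> real \<Rightarrow> real"
    and T :: "nat \<Rightarrow> 'a \<Rightarrow> 'b"
  assumes "pn_space \<nu>" and "strongly_complete \<nu>"
    and "pn_space \<mu>"
    and "\<And>n. T n \<in> bounded_ops \<nu> \<mu>"
    and "\<And>x w'. 0 < w' \<Longrightarrow> w' < 1 \<Longrightarrow> bdd_above (range (\<lambda>n. pn_norm \<mu> w' (T n x)))"
  shows "\<forall>w'. 0 < w' \<and> w' < 1 \<longrightarrow>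
           (\<exists>w. 0 < w \<and> w < 1 \<and> (SUP n. op_norm \<nu> \<mu> w w' (T n)) < \<infinity>)"
proof (intro allI impI)
  fix w' :: real assume "0 < w' \<and> w' < 1"
  then have w'1: "0 < w'" "w' < 1" by auto
  have lin: "linear (T n)" for n using assms(4) unfolding bounded_ops_def by blast
  interpret V: Metric_space UNIV "dd \<nu>" by (rule metric[OF assms(1)])
  define F where "F k = {x. \<forall>n. pn_norm \<mu> w' (T n x) \<le> real k}" for k :: nat
  have closed: "closedin V.mtopology (F k)" for k
    unfolding V.closedin_metric
  proof (intro conjI allI impI)
    show "F k \<subseteq> UNIV" by simp
    fix x assume "x \<in> UNIV - F k"
    then obtain n where n: "pn_norm \<mu> w' (T n x) > real k" by (auto simp: F_def not_le)
    define e where "e = min ((pn_norm \<mu> w' (T n x) - k) / 2) (1 - w')"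
    have e: "e > 0" using n w'1 e_def by simp
    obtain \<delta> where \<delta>: "\<delta> > 0" "\<forall>y. dd \<nu> x y < \<delta> \<longrightarrow> dd \<mu> (T n x) (T n y) < e"
      using cont_op[OF assms(1) assms(3) assms(4) e] by blast
    have "y \<notin> F k" if "dd \<nu> x y < \<delta>" for y
    proof -
      have F1: "pn_norm \<mu> w' (T n x - T n y) \<le> e"
        using N4[OF assms(3) w'1 \<delta>(2)[rule_format, OF that]] e_def by simp
      have F2: "pn_norm \<mu> w' (T n x) \<le> pn_norm \<mu> w' (T n x - T n y) + pn_norm \<mu> w' (T n y)"
        using Ntri[OF assms(3) w'1, of "T n x - T n y" "T n y"] by simp
      have F3: "e \<le> (pn_norm \<mu> w' (T n x) - k) / 2" unfolding e_def by (rule min.cobounded1)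
      have A: "pn_norm \<mu> w' (T n x) - e \<le> pn_norm \<mu> w' (T n y)" using F1 F2 by linarith
      have B: "real k < pn_norm \<mu> w' (T n x) - e" using F3 n by argo
      have "pn_norm \<mu> w' (T n y) > k" using A B by linarith
      then show ?thesis by (auto simp: F_def not_le)
    qed
    then show "\<exists>r>0. disjnt (F k) (V.mball x r)" using \<delta>(1) by (auto simp: disjnt_def)
  qed
  have union: "\<Union>(range F) = UNIV"
  proof -
    have "x \<in> \<Union>(range F)" for x
    proof -
      obtain B where B: "\<And>n. pn_norm \<mu> w' (T n x) \<le> B"
        using assms(5)[OF w'1, of x] by (auto simp: bdd_above_def)
      have Bc: "B \<le> real (nat \<lceil>B\<rceil>)" by (rule real_nat_ceiling_ge)
      have "pn_norm \<mu> w' (T n x) \<le> real (nat \<lceil>B\<rceil>)" for n using B[of n] Bc by (rule order_trans)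
      then have "x \<in> F (nat \<lceil>B\<rceil>)" unfolding F_def by blast
      then show ?thesis by blast
    qed
    then show ?thesis by blast
  qed
  have "V.mtopology interior_of \<Union>(range F) \<noteq> {}"
  proof -
    have "V.mtopology interior_of UNIV = UNIV"
      using interior_of_topspace[of V.mtopology] unfolding V.topspace_mtopology .
    then show ?thesis unfolding union by simp
  qed
  moreover have "countable (range F)" by (rule countable_image) simp
  ultimately obtain k where "V.mtopology interior_of F k \<noteq> {}"
    using V.metric_Baire_category_alt[OF complete[OF assms(1,2)], of "range F"] closed by blast
  then obtain p where p: "p \<in> V.mtopology interior_of F k" by blast
  obtain r where r: "r > 0" "V.mball p r \<subseteq> V.mtopology interior_of F k"
  proof -
    have "openin V.mtopology (V.mtopology interior_of F k)" by (rule openin_interior_of)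
    then have "\<forall>x. x \<in> V.mtopology interior_of F k \<longrightarrow> (\<exists>r>0. V.mball x r \<subseteq> V.mtopology interior_of F k)"
      unfolding V.openin_mtopology by (rule conjunct2)
    then have "\<exists>r>0. V.mball p r \<subseteq> V.mtopology interior_of F k" using p by blast
    then obtain r where "r > 0" "V.mball p r \<subseteq> V.mtopology interior_of F k" by blast
    then show ?thesis by (rule that)
  qed
  have r2: "V.mball p r \<subseteq> F k" using r(2) interior_of_subset[of V.mtopology "F k"] by (rule order_trans)
  define s where "s = min r 1 / 2"
  have s: "0 < s" "s < 1" "s < r" using r s_def by auto
  define w where "w = 1 - s / 2"
  have w: "0 < w" "w < 1" using s w_def by auto
  have bound_y: "pn_norm \<mu> w' (T n y) \<le> 2 * k" if "pn_norm \<nu> w y < s" for n y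
  proof -
    have "dd \<nu> p (p + y) \<le> s" using N5[OF assms(1) s(1,2), of y p] that w_def by simp
    then have "dd \<nu> p (p + y) < r" using s(3) by linarith
    then have "p + y \<in> V.mball p r" by (simp add: V.in_mball)
    then have "p + y \<in> F k" using r2 by blast
    moreover have "p \<in> V.mball p r" using r(1) dd_self[OF assms(1), of p] by (simp add: V.in_mball)
    then have "p \<in> F k" using r2 by blast
    ultimately have a: "pn_norm \<mu> w' (T n (p + y)) \<le> k" "pn_norm \<mu> w' (T n p) \<le> k"
      by (auto simp: F_def)
    have "T n y = T n (p + y) + - T n p" using linear_add[OF lin[of n], of p y] by simp
    then have "pn_norm \<mu> w' (T n y) \<le> pn_norm \<mu> w' (T n (p + y)) + pn_norm \<mu> w' (- T n p)"
      using Ntri[OF assms(3) w'1, of "T n (p + y)" "- T n p"] by simp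
    then show ?thesis using a Nneg[OF assms(3)] by simp
  qed
  have bound_x: "pn_norm \<mu> w' (T n x) \<le> 4 * real k / s" if "pn_norm \<nu> w x \<le> 1" for n x
  proof -
    define y where "y = (s / 2) *\<^sub>R x"
    have "pn_norm \<nu> w y \<le> s / 2 * pn_norm \<nu> w x" using Nscale[OF assms(1) w, of "s/2" x] s y_def by simp
    also have "\<dots> \<le> s / 2" using that s by (simp add: mult_le_cancel_left1)
    also have "\<dots> < s" using s by simp
    finally have ty: "pn_norm \<mu> w' (T n y) \<le> 2 * k" by (rule bound_y)
    have "T n x = (2 / s) *\<^sub>R T n y" using linear_scale[OF lin[of n], of "s/2" x] s y_def by simp
    then have "pn_norm \<mu> w' (T n x) \<le> 2 / s * pn_norm \<mu> w' (T n y)"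
      using Nscale[OF assms(3) w'1, of "2/s" "T n y"] s by simp
    also have "\<dots> \<le> 2 / s * (2 * k)" using ty s by (intro mult_left_mono) auto
    finally show ?thesis by simp
  qed
  have "(SUP n. op_norm \<nu> \<mu> w w' (T n)) \<le> ereal (4 * real k / s)"
    unfolding op_norm_def by (intro SUP_least) (auto intro: bound_x)
  moreover have "ereal (4 * real k / s) < \<infinity>" by simp
  ultimately have "(SUP n. op_norm \<nu> \<mu> w w' (T n)) < \<infinity>" by (rule le_less_trans)
  then show "\<exists>w. 0 < w \<and> w < 1 \<and> (SUP n. op_norm \<nu> \<mu> w w' (T n)) < \<infinity>" using w by blast
qed


end
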